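(* Let $1\le r\le\infty$ and let $P=U(\mathbb R^p)$ and $Q=V(\mathbb R^q)$ be nonzero linear subspaces of $\mathbb R^n$, where $U\in\mathbb R^{n\times p}$ and $V\in\mathbb R^{n\times q}$ have orthonormal columns. Let $\theta_{\max}(P,Q)\in[0,\pi/2]$ be defined by $\cos\theta_{\max}(P,Q)=\sigma_{\min}(V^\top U)$, the smallest singular value of $V^\top U$. Then $${\rm Dis}_r(P,Q)=2\left\|\left(\tfrac{\sqrt2}{2},\ \sin\left[\tfrac{\theta_{\max}(P,Q)}{2}\right]\right)\right\|_r\quad\text{if } p\ne q,$$ $${\rm Dis}_r(P,Q)=2\|(1,1)\|_r\,\sin\left[\tfrac{\theta_{\max}(P,Q)}{2}\right]\quad\text{if } p=q.$$
   Context: $S_n$ is the unit sphere of $\mathbb R^n$. For nonzero closed convex cones $P,Q$: $\Theta(P,Q):=\max_{u\in P\cap S_n}\min_{v\in Q\cap S_n}\arccos\langle u,v\rangle$ and ${\rm Dis}_r(P,Q):=2\left\|\left(\sin[\Theta(P,Q)/2],\ \sin[\Theta(Q,P)/2]\right)\right\|_r$, where $\|\cdot\|_r$ is the $\ell^r$-norm on $\mathbb R^2$. (Equivalently ${\rm Dis}_r(P,Q)=\|(\Lambda(P\cap S_n,Q\cap S_n),\Lambda(Q\cap S_n,P\cap S_n))\|_r$ with $\Lambda(C,D)=\max_{x\in C}\min_{y\in D}\|x-y\|$.) $\theta_{\max}(P,Q)$ is the largest principal angle between $P$ and $Q$. *)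

theory Defs
  imports "HOL-Analysis.Analysis" "HOL-Library.Extended_Real"
begin

text \<open>Angle Theta(P,Q) = max over unit u in P of min over unit v in Q of arccos(u . v).\<close>
definition cone_angle :: "('a::real_inner) set \<Rightarrow> 'a set \<Rightarrow> real" where
  "cone_angle P Q = (SUP u \<in> P \<inter> sphere 0 1. INF v \<in> Q \<inter> sphere 0 1. arccos (inner u v))"

text \<open>l^r norm on R^2, r in [1, infinity] (ereal).\<close>
definition lr_norm2 :: "ereal \<Rightarrow> real \<Rightarrow> real \<Rightarrow> real" where
  "lr_norm2 r a b = (if r = \<infinity> then max \<bar>a\<bar> \<bar>b\<bar>
     else (\<bar>a\<bar> powr real_of_ereal r + \<bar>b\<bar> powr real_of_ereal r) powr (1 / real_of_ereal r))"

definition Dis :: "ereal \<Rightarrow> ('a::real_inner) set \<Rightarrow> 'a set \<Rightarrow> real" where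
  "Dis r P Q = 2 * lr_norm2 r (sin (cone_angle P Q / 2)) (sin (cone_angle Q P / 2))"

text \<open>Real eigenvalues of a square matrix.\<close>
definition eigenvalues :: "real^'k^'k \<Rightarrow> real set" where
  "eigenvalues M = {c. \<exists>x. x \<noteq> 0 \<and> M *v x = c *\<^sub>R x}"

text \<open>Smallest singular value of a q x p matrix A (rows 'q, columns 'p): the smallest of
  its min(p,q) singular values, i.e. sqrt of the smallest eigenvalue of the smaller Gram matrix.\<close>
definition sigma_min :: "real^'p^'q \<Rightarrow> real" where
  "sigma_min A = (if CARD('p) \<le> CARD('q)
      then sqrt (Inf (eigenvalues (transpose A ** A)))
      else sqrt (Inf (eigenvalues (A ** transpose A))))"

text \<open>theta_max in [0, pi/2] with cos theta_max = sigma_min(V^T U).\<close>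
definition theta_max :: "real^'p^'n \<Rightarrow> real^'q^'n \<Rightarrow> real" where
  "theta_max U V = arccos (sigma_min (transpose V ** U))"

end

theory Submission imports Defs begin


lemma adj: "(A *v x) \<bullet> (y::real^_) = x \<bullet> (transpose A *v y)"
  by (metis dot_lmul_matrix inner_commute transpose_matrix_vector)

lemma isom_inner:
  fixes V :: "real^'q^'n"
  assumes "transpose V ** V = mat 1"
  shows "(V *v x) \<bullet> (V *v y) = x \<bullet> y"
  by (simp add: adj matrix_vector_mul_assoc assms)

lemma isom_norm:
  fixes V :: "real^'q^'n"
  assumes "transpose V ** V = mat 1"
  shows "norm (V *v x) = norm x"
  by (simp add: norm_eq_sqrt_inner isom_inner[OF assms])

lemma transp_norm_le:
  fixes V :: "real^'q^'n"
  assumes "transpose V ** V = mat 1"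
  shows "norm (transpose V *v u) \<le> norm u"
proof -
  let ?w = "transpose V *v u"
  have "norm ?w ^ 2 = ?w \<bullet> ?w" by (simp add: power2_norm_eq_inner)
  also have "\<dots> = u \<bullet> (V *v ?w)" by (metis adj inner_commute transpose_transpose)
  also have "\<dots> \<le> norm u * norm (V *v ?w)" by (rule norm_cauchy_schwarz)
  also have "\<dots> = norm u * norm ?w" by (simp add: isom_norm[OF assms])
  finally have "norm ?w * norm ?w \<le> norm u * norm ?w" by (simp add: power2_eq_square)
  then show ?thesis
    by (cases "norm ?w = 0") (auto simp: mult_le_cancel_right)
qed

lemma sym_min_eig:
  fixes M :: "real^'k^'k"
  assumes sym: "transpose M = M"
  obtains x0 where "norm x0 = 1" "M *v x0 = (x0 \<bullet> (M *v x0)) *\<^sub>R x0"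
    "\<And>x. (x0 \<bullet> (M *v x0)) * (x \<bullet> x) \<le> x \<bullet> (M *v x)"
proof -
  let ?f = "\<lambda>x. x \<bullet> (M *v x)"
  have cont: "continuous_on (sphere 0 1) ?f"
    by (intro continuous_intros matrix_vector_mult_linear_continuous_on[unfolded o_def])
  have ne: "sphere (0::real^'k) 1 \<noteq> {}" by (simp add: sphere_eq_empty)
  obtain x0 where x0: "x0 \<in> sphere 0 1" and mn: "\<And>y. y \<in> sphere 0 1 \<Longrightarrow> ?f x0 \<le> ?f y"
    using continuous_attains_inf[OF compact_sphere ne cont] by blast
  define l where "l = ?f x0"
  have n1: "norm x0 = 1" using x0 by simp
  have x0x0: "x0 \<bullet> x0 = 1" using n1 by (simp add: dot_square_norm)
  have lb: "l * (x \<bullet> x) \<le> ?f x" for x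
  proof (cases "x = 0")
    case True then show ?thesis by simp
  next
    case False
    let ?y = "(1 / norm x) *\<^sub>R x"
    have "?y \<in> sphere 0 1" using False by simp
    then have "l \<le> ?f ?y" using mn l_def by blast
    also have "?f ?y = ?f x / (norm x)^2"
      by (simp add: matrix_vector_mult_scaleR power2_eq_square)
    finally have "l * (norm x)^2 \<le> ?f x" using False by (simp add: pos_le_divide_eq)
    then show ?thesis by (simp add: dot_square_norm)
  qed
  define w where "w = M *v x0 - l *\<^sub>R x0"
  define d where "d = ?f w - l * (w \<bullet> w)"
  define a where "a = w \<bullet> w"
  have d0: "d \<ge> 0" using lb[of w] d_def by simp
  have a0: "a \<ge> 0" using a_def by simp
  have symm: "x0 \<bullet> (M *v w) = w \<bullet> (M *v x0)"
    by (metis adj inner_commute sym)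
  have wM: "w \<bullet> (M *v x0) = a + l * (x0 \<bullet> w)"
    unfolding a_def w_def by (simp add: inner_diff_right inner_diff_left inner_commute algebra_simps)
  have quad: "0 \<le> 2 * t * a + t^2 * d" for t
  proof -
    have le: "l * ((x0 + t *\<^sub>R w) \<bullet> (x0 + t *\<^sub>R w)) \<le> ?f (x0 + t *\<^sub>R w)" by (rule lb)
    have e1: "?f (x0 + t *\<^sub>R w) = l + t * (w \<bullet> (M *v x0)) + t * (x0 \<bullet> (M *v w)) + t^2 * ?f w"
      unfolding l_def by (simp add: matrix_vector_right_distrib matrix_vector_mult_scaleR
          inner_add_left inner_add_right power2_eq_square algebra_simps)
    have e2: "(x0 + t *\<^sub>R w) \<bullet> (x0 + t *\<^sub>R w) = 1 + 2 * t * (x0 \<bullet> w) + t^2 * (w \<bullet> w)"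
      using x0x0 by (simp add: inner_add_left inner_add_right inner_commute power2_eq_square algebra_simps)
    have "?f (x0 + t *\<^sub>R w) - l * ((x0 + t *\<^sub>R w) \<bullet> (x0 + t *\<^sub>R w)) = 2 * t * a + t^2 * d"
      unfolding e1 e2 symm wM d_def by (simp add: algebra_simps)
    then show ?thesis using le by linarith
  qed
  have "a = 0"
  proof (rule ccontr)
    assume "a \<noteq> 0"
    then have ap: "a > 0" using a0 by simp
    define t where "t = - a / (d + 1)"
    have "0 \<le> 2 * t * a + t^2 * d" by (rule quad)
    then have "0 \<le> (d+1)^2 * (2 * t * a + t^2 * d)" using d0 by simp
    also have "(d+1)^2 * (2 * t * a + t^2 * d) = -(a^2) * (d + 2)"
    proof -
      have nz: "d + 1 \<noteq> 0" using d0 by simp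
      have "(d+1)^2 * (2 * t * a + t^2 * d) = 2 * a * (t * (d+1)) * (d+1) + (t * (d+1))^2 * d"
        by (simp add: algebra_simps power2_eq_square)
      also have "t * (d+1) = - a" unfolding t_def using nz by simp
      finally show ?thesis by (simp add: algebra_simps power2_eq_square)
    qed
    finally have "0 \<le> -(a^2) * (d + 2)" .
    moreover have "a^2 * (d + 2) > 0" using ap d0 by (intro mult_pos_pos) auto
    ultimately show False by linarith
  qed
  then have "w = 0" using a_def by simp
  then have "M *v x0 = l *\<^sub>R x0" using w_def by simp
  then show ?thesis using that n1 lb l_def by blast
qed




definition emin :: "real^'p^'q \<Rightarrow> real" where
  "emin A = sqrt (Inf (eigenvalues (transpose A ** A)))"

lemma min_sv:
  fixes A :: "real^'p^'q"
  obtains x0 where "norm x0 = 1" "\<And>x. norm x = 1 \<Longrightarrow> norm (A *v x0) \<le> norm (A *v x)"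
    "emin A = norm (A *v x0)"
    "(transpose A ** A) *v x0 = (norm (A *v x0))^2 *\<^sub>R x0"
proof -
  let ?M = "transpose A ** A"
  have sym: "transpose ?M = ?M" by (simp add: matrix_transpose_mul)
  have fx: "x \<bullet> (?M *v x) = (norm (A *v x))^2" for x
    by (metis adj matrix_vector_mul_assoc inner_commute power2_norm_eq_inner)
  obtain x0 where n1: "norm x0 = 1" and ev: "?M *v x0 = (x0 \<bullet> (?M *v x0)) *\<^sub>R x0"
    and lb: "\<And>x. (x0 \<bullet> (?M *v x0)) * (x \<bullet> x) \<le> x \<bullet> (?M *v x)"
    using sym_min_eig[OF sym] by blast
  define l where "l = (norm (A *v x0))^2"
  have ev': "?M *v x0 = l *\<^sub>R x0" using ev fx l_def by simp
  have lb': "l * (x \<bullet> x) \<le> (norm (A *v x))^2" for x using lb[of x] fx l_def by simp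
  have inf: "Inf (eigenvalues ?M) = l"
  proof (rule cInf_eq_minimum)
    show "l \<in> eigenvalues ?M" unfolding eigenvalues_def using ev' n1 by (auto intro!: exI[of _ x0])
  next
    fix c assume "c \<in> eigenvalues ?M"
    then obtain x where x: "x \<noteq> 0" "?M *v x = c *\<^sub>R x" unfolding eigenvalues_def by blast
    have "c * (x \<bullet> x) = x \<bullet> (?M *v x)" using x by simp
    also have "\<dots> = (norm (A *v x))^2" by (rule fx)
    finally have "l * (x \<bullet> x) \<le> c * (x \<bullet> x)" using lb'[of x] by simp
    moreover have "x \<bullet> x > 0" using x by simp
    ultimately show "l \<le> c" by simp
  qed
  have mn: "norm (A *v x0) \<le> norm (A *v x)" if "norm x = 1" for x
  proof -
    have "x \<bullet> x = 1" using that by (simp add: dot_square_norm)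
    then have "(norm (A *v x0))^2 \<le> (norm (A *v x))^2" using lb'[of x] l_def by simp
    then show ?thesis by (simp add: power2_le_iff_abs_le)
  qed
  show ?thesis
    using that[OF n1 mn] inf l_def ev' unfolding emin_def by simp
qed

lemma inf_angle:
  fixes V :: "real^'q^'n"
  assumes V: "transpose V ** V = mat 1" and u: "norm u = 1"
  shows "(INF v \<in> range ((*v) V) \<inter> sphere 0 1. arccos (u \<bullet> v)) = arccos (norm (transpose V *v u))"
proof -
  let ?w = "transpose V *v u"
  have wle: "norm ?w \<le> 1" using transp_norm_le[OF V, of u] u by simp
  show ?thesis
  proof (rule cInf_eq_minimum)
    obtain y where y: "norm y = 1" "?w \<bullet> y = norm ?w"
    proof (cases "?w = 0")
      case True
      show ?thesis by (rule that[of "axis undefined 1"]) (use True in \<open>simp_all add: norm_axis_1 del: transpose_matrix_vector\<close>)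
    next
      case False
      show ?thesis by (rule that[of "(1 / norm ?w) *\<^sub>R ?w"]) (use False in \<open>auto simp: dot_square_norm power2_eq_square simp del: transpose_matrix_vector\<close>)
    qed
    have "V *v y \<in> range ((*v) V) \<inter> sphere 0 1" using y isom_norm[OF V] by auto
    moreover have "u \<bullet> (V *v y) = norm ?w" using y by (metis adj inner_commute transpose_transpose)
    ultimately show "arccos (norm ?w) \<in> (\<lambda>v. arccos (u \<bullet> v)) ` (range ((*v) V) \<inter> sphere 0 1)"
      by (metis image_eqI)
  next
    fix z assume "z \<in> (\<lambda>v. arccos (u \<bullet> v)) ` (range ((*v) V) \<inter> sphere 0 1)"
    then obtain y where z: "z = arccos (u \<bullet> (V *v y))" and ny: "norm (V *v y) = 1" by auto
    have "norm y = 1" using ny isom_norm[OF V] by simp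
    have "u \<bullet> (V *v y) = ?w \<bullet> y" by (metis adj inner_commute transpose_transpose)
    also have "\<dots> \<le> norm ?w * norm y" by (rule norm_cauchy_schwarz)
    finally have le: "u \<bullet> (V *v y) \<le> norm ?w" using \<open>norm y = 1\<close> by simp
    have "\<bar>u \<bullet> (V *v y)\<bar> \<le> 1" using Cauchy_Schwarz_ineq2[of u "V *v y"] u ny by simp
    then show "arccos (norm ?w) \<le> z" unfolding z using le wle by (simp add: arccos_le_mono)
  qed
qed

lemma cone_angle_eq:
  fixes U :: "real^'p^'n" and V :: "real^'q^'n"
  assumes U: "transpose U ** U = mat 1" and V: "transpose V ** V = mat 1"
  shows "cone_angle (range ((*v) U)) (range ((*v) V)) = arccos (emin (transpose V ** U))"
proof -
  let ?A = "transpose V ** U"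
  obtain x0 where n1: "norm x0 = 1" and mn: "\<And>x. norm x = 1 \<Longrightarrow> norm (?A *v x0) \<le> norm (?A *v x)"
    and e: "emin ?A = norm (?A *v x0)" using min_sv by blast
  have "cone_angle (range ((*v) U)) (range ((*v) V)) =
      (SUP u \<in> range ((*v) U) \<inter> sphere 0 1. arccos (norm (transpose V *v u)))"
    unfolding cone_angle_def by (rule SUP_cong) (auto simp: inf_angle[OF V])
  also have "\<dots> = arccos (emin ?A)"
  proof (rule cSup_eq_maximum)
    have "U *v x0 \<in> range ((*v) U) \<inter> sphere 0 1" using n1 isom_norm[OF U] by auto
    moreover have "transpose V *v (U *v x0) = ?A *v x0" by (simp add: matrix_vector_mul_assoc)
    ultimately show "arccos (emin ?A) \<in> (\<lambda>u. arccos (norm (transpose V *v u))) ` (range ((*v) U) \<inter> sphere 0 1)"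
      using e by (metis image_eqI)
  next
    fix z assume "z \<in> (\<lambda>u. arccos (norm (transpose V *v u))) ` (range ((*v) U) \<inter> sphere 0 1)"
    then obtain x where z: "z = arccos (norm (transpose V *v (U *v x)))" and nx: "norm (U *v x) = 1" by auto
    have x1: "norm x = 1" using nx isom_norm[OF U] by simp
    have eq: "transpose V *v (U *v x) = ?A *v x" by (simp add: matrix_vector_mul_assoc)
    have "norm (?A *v x) \<le> 1" using transp_norm_le[OF V, of "U *v x"] nx eq by simp
    moreover have "norm (?A *v x0) \<le> 1" using transp_norm_le[OF V, of "U *v x0"] n1 isom_norm[OF U]
      by (simp add: matrix_vector_mul_assoc)
    ultimately show "z \<le> arccos (emin ?A)" unfolding z eq e using mn[OF x1] by (simp add: arccos_le_mono)
  qed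
  finally show ?thesis .
qed




lemma emin_nonneg: "emin A \<ge> 0"
  using min_sv[of A] by (metis norm_ge_zero)

lemma emin_zero_if_not_inj:
  fixes A :: "real^'p^'q"
  assumes "\<not> inj ((*v) A)"
  shows "emin A = 0"
proof -
  obtain x y where xy: "x \<noteq> y" "A *v x = A *v y" using assms unfolding inj_def by blast
  define z where "z = (1 / norm (x - y)) *\<^sub>R (x - y)"
  have z1: "norm z = 1" using xy unfolding z_def by simp
  have Az: "A *v z = 0" using xy unfolding z_def by (simp add: matrix_vector_mult_scaleR matrix_vector_mult_diff_distrib)
  obtain x0 where "\<And>x. norm x = 1 \<Longrightarrow> norm (A *v x0) \<le> norm (A *v x)" "emin A = norm (A *v x0)"
    using min_sv by blast
  then show ?thesis using z1 Az by (metis norm_zero norm_ge_zero order_antisym)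
qed

lemma emin_pos_if_inj:
  fixes A :: "real^'p^'q"
  assumes "inj ((*v) A)"
  shows "emin A \<noteq> 0"
proof -
  obtain x0 where "norm x0 = 1" "emin A = norm (A *v x0)"
    using min_sv by blast
  moreover have "A *v 0 = 0" by simp
  ultimately show ?thesis using assms unfolding inj_def by (metis norm_eq_zero zero_neq_one norm_zero)
qed

lemma inj_card:
  fixes A :: "real^'p^'q"
  assumes "inj ((*v) A)"
  shows "CARD('p) \<le> CARD('q)"
proof -
  have "dim (range ((*v) A)) = dim (UNIV :: (real^'p) set)"
    using assms by (intro dim_image_eq matrix_vector_mul_linear) (auto intro: inj_on_subset)
  moreover have "dim (range ((*v) A)) \<le> DIM(real^'q)" by (rule dim_subset_UNIV)
  ultimately show ?thesis by (simp add: dim_UNIV DIM_cart)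
qed

lemma card_eq_inj:
  fixes A :: "real^'p^'q"
  assumes c: "CARD('p) = CARD('q)" and i: "inj ((*v) (transpose A))"
  shows "inj ((*v) A)"
proof -
  have s: "surj ((*v) (transpose A))"
    using i c by (intro linear_injective_imp_surjective matrix_vector_mul_linear) (auto simp: dim_UNIV DIM_cart)
  show ?thesis
  proof (rule injI)
    fix x y assume "A *v x = A *v y"
    then have A0: "A *v (x - y) = 0" by (simp add: matrix_vector_mult_diff_distrib)
    obtain z where z: "x - y = transpose A *v z" using s by (metis surjD)
    have "(x - y) \<bullet> (x - y) = (A *v (x - y)) \<bullet> z" using z by (metis adj)
    then have "(x - y) \<bullet> (x - y) = 0" using A0 by simp
    then show "x = y" by simp
  qed
qed

lemma emin_le:
  fixes A :: "real^'p^'q"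
  assumes "emin A \<noteq> 0"
  shows "emin (transpose A) \<le> emin A"
proof -
  obtain x0 where n1: "norm x0 = 1" and e: "emin A = norm (A *v x0)"
    and ev: "(transpose A ** A) *v x0 = (norm (A *v x0))^2 *\<^sub>R x0"
    using min_sv by blast
  define l where "l = emin A"
  have lp: "l > 0" using assms emin_nonneg[of A] l_def by simp
  define y where "y = A *v x0"
  have ny: "norm y = l" using e l_def y_def by simp
  have "A *v (transpose A *v y) = A *v ((transpose A ** A) *v x0)"
    by (simp add: y_def matrix_vector_mul_assoc del: transpose_matrix_vector)
  also have "\<dots> = l^2 *\<^sub>R y" using ev e l_def y_def by (simp add: matrix_vector_mult_scaleR)
  finally have AAy: "A *v (transpose A *v y) = l^2 *\<^sub>R y" .
  have "(norm (transpose A *v y))^2 = (transpose A *v y) \<bullet> (transpose A *v y)"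
    by (simp add: power2_norm_eq_inner del: transpose_matrix_vector)
  also have "\<dots> = y \<bullet> (A *v (transpose A *v y))"
    by (metis adj transpose_transpose)
  also have "\<dots> = l^2 * (norm y)^2" using AAy by (simp add: power2_norm_eq_inner)
  finally have "(norm (transpose A *v y))^2 = (l * l)^2" using ny by (simp add: power2_eq_square)
  then have nAy: "norm (transpose A *v y) = l * l" using lp
    by (metis norm_ge_zero power2_eq_imp_eq mult_nonneg_nonneg less_imp_le)
  define y' where "y' = (1 / l) *\<^sub>R y"
  have ny': "norm y' = 1" using ny lp unfolding y'_def by simp
  have "norm (transpose A *v y') = l" using nAy lp unfolding y'_def
    by (simp add: matrix_vector_mult_scaleR del: transpose_matrix_vector)
  moreover obtain y0 where "\<And>x. norm x = 1 \<Longrightarrow> norm (transpose A *v y0) \<le> norm (transpose A *v x)"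
    "emin (transpose A) = norm (transpose A *v y0)"
    using min_sv[of "transpose A"] by (auto simp del: transpose_matrix_vector)
  ultimately show ?thesis using ny' l_def by metis
qed

lemma emin_square:
  fixes A :: "real^'p^'q"
  assumes c: "CARD('p) = CARD('q)"
  shows "emin (transpose A) = emin A"
proof (cases "emin A = 0")
  case True
  then have "\<not> inj ((*v) A)" using emin_pos_if_inj by blast
  then have "\<not> inj ((*v) (transpose A))" using card_eq_inj[OF c] by blast
  then show ?thesis using True emin_zero_if_not_inj by metis
next
  case False
  then have "inj ((*v) A)" using emin_zero_if_not_inj by blast
  then have "inj ((*v) (transpose (transpose A)))" by simp
  then have "inj ((*v) (transpose A))" using card_eq_inj[OF c[symmetric]] by blast
  then have "emin (transpose A) \<noteq> 0" by (rule emin_pos_if_inj)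
  then have "emin (transpose (transpose A)) \<le> emin (transpose A)" by (rule emin_le)
  then show ?thesis using emin_le[OF False] by simp
qed




lemma lr_sym: "lr_norm2 r a b = lr_norm2 r b a"
  unfolding lr_norm2_def by (simp add: max.commute add.commute)

lemma lr_scale:
  assumes r: "1 \<le> r" and s: "s \<ge> 0"
  shows "lr_norm2 r s s = lr_norm2 r 1 1 * s"
proof (cases "r = \<infinity>")
  case True then show ?thesis using s unfolding lr_norm2_def by simp
next
  case False
  then obtain x where x: "r = ereal x" using r by (cases r) auto
  have x1: "x \<ge> 1" using r x by simp
  have "(s powr x + s powr x) powr (1 / x) = (2 * s powr x) powr (1 / x)" by simp
  also have "\<dots> = 2 powr (1/x) * (s powr x) powr (1/x)" using s by (simp add: powr_mult)
  also have "(s powr x) powr (1/x) = s" using s x1 by (simp add: powr_powr)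
  finally have e: "(s powr x + s powr x) powr (1 / x) = 2 powr (1/x) * s" .
  show ?thesis using False x s e unfolding lr_norm2_def by simp
qed

theorem mainTheorem9:
  fixes U :: "real^'p^'n" and V :: "real^'q^'n" and r :: ereal
  assumes "1 \<le> r"
    and "transpose U ** U = mat 1"
    and "transpose V ** V = mat 1"
  shows "(CARD('p) \<noteq> CARD('q) \<longrightarrow>
           Dis r (range ((*v) U)) (range ((*v) V))
             = 2 * lr_norm2 r (sqrt 2 / 2) (sin (theta_max U V / 2)))
       \<and> (CARD('p) = CARD('q) \<longrightarrow>
           Dis r (range ((*v) U)) (range ((*v) V))
             = 2 * lr_norm2 r 1 1 * sin (theta_max U V / 2))"
proof -
  define A where "A = transpose V ** U"
  have tA: "transpose U ** V = transpose A" unfolding A_def by (simp add: matrix_transpose_mul)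
  have c1: "cone_angle (range ((*v) U)) (range ((*v) V)) = arccos (emin A)"
    unfolding A_def by (rule cone_angle_eq[OF assms(2,3)])
  have c2: "cone_angle (range ((*v) V)) (range ((*v) U)) = arccos (emin (transpose A))"
    using cone_angle_eq[OF assms(3,2)] tA by simp
  have sm: "sigma_min A = (if CARD('p) \<le> CARD('q) then emin A else emin (transpose A))"
    unfolding sigma_min_def emin_def by simp
  have th: "theta_max U V = arccos (sigma_min A)" unfolding theta_max_def A_def ..
  have D: "Dis r (range ((*v) U)) (range ((*v) V)) =
      2 * lr_norm2 r (sin (arccos (emin A) / 2)) (sin (arccos (emin (transpose A)) / 2))"
    unfolding Dis_def c1 c2 ..
  have s45: "sin (arccos 0 / 2) = sqrt 2 / 2" by (simp add: sin_45)
  show ?thesis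
  proof (intro conjI impI)
    assume ne: "CARD('p) \<noteq> CARD('q)"
    show "Dis r (range ((*v) U)) (range ((*v) V)) = 2 * lr_norm2 r (sqrt 2 / 2) (sin (theta_max U V / 2))"
    proof (cases "CARD('p) \<le> CARD('q)")
      case True
      then have lt: "CARD('q) > CARD('p)" using ne by simp
      have "\<not> inj ((*v) (transpose A))" using inj_card[of "transpose A"] lt by auto
      then have "emin (transpose A) = 0" by (rule emin_zero_if_not_inj)
      then show ?thesis using D th sm True by (simp add: sin_45) (rule lr_sym)
    next
      case False
      have "\<not> inj ((*v) A)" using inj_card[of A] False by auto
      then have "emin A = 0" by (rule emin_zero_if_not_inj)
      then show ?thesis using D th sm False by (simp add: sin_45)
    qed
  next
    assume eq: "CARD('p) = CARD('q)"
    have e: "emin (transpose A) = emin A" by (rule emin_square[OF eq])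
    have e1: "emin A \<le> 1"
    proof -
      obtain x0 where n1: "norm x0 = 1" and em: "emin A = norm (A *v x0)" using min_sv by blast
      have eq: "A *v x0 = transpose V *v (U *v x0)" unfolding A_def
        by (simp add: matrix_vector_mul_assoc del: transpose_matrix_vector)
      have "emin A = norm (transpose V *v (U *v x0))" using em eq by (simp only:)
      also have "\<dots> \<le> norm (U *v x0)" by (rule transp_norm_le[OF assms(3)])
      also have "\<dots> = 1" using isom_norm[OF assms(2), of x0] n1 by (simp only:)
      finally show ?thesis .
    qed
    have sg: "sin (arccos (emin A) / 2) \<ge> 0"
    proof (rule sin_ge_zero)
      have "-1 \<le> emin A" using emin_nonneg[of A] by linarith
      then have "0 \<le> arccos (emin A)" "arccos (emin A) \<le> pi"
        using arccos_lbound[of "emin A"] arccos_ubound[of "emin A"] e1 by auto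
      then show "0 \<le> arccos (emin A) / 2" "arccos (emin A) / 2 \<le> pi" by auto
    qed
    then show "Dis r (range ((*v) U)) (range ((*v) V)) = 2 * lr_norm2 r 1 1 * sin (theta_max U V / 2)"
      using D e th sm eq lr_scale[OF assms(1) sg] by (simp del: lr_scale)
  qed
qed


end
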